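(* Let $c\ge2$ and let $F$ be a standard $c$-coloring with associated partially looped coloring $E_F$. Then for every color $i\in[c]$: every embedding of $K^i_{\max(c+1,6)}$ into $E_F$ maps all vertices to a single vertex of $E_F$; and every embedding of $K_3^i$ into $E_F$ whose image contains a vertex of $\mathcal X_F$ maps all three vertices to a single vertex.
   Context: A $c$-coloring $F$ is a map from the $2$-subsets of a finite set $V(F)$ to $[c]$. $F$ is standard if it contains no induced copy of any coloring in $\hat K_{3,1}$ or $\hat K_{3,3}$, where: $\hat K_{3,1}$ is the family of $4$-vertex colorings consisting of a monochromatic triangle of color $a$ plus a vertex joined to it by either (two edges of color $a$ and one of color $b\ne a$), or (three edges of three distinct colors, one being $a$), or (two edges of color $b$ and one of color $d$, with $a,b,d$ distinct); $\hat K_{3,3}$ is the family of $6$-vertex colorings consisting of two disjoint triangles monochromatic in colors $a,b$ with all nine edges between them of color $d$, $a,b,d$ distinct. $\mathcal X_F$ is the set of inclusion-maximal vertex sets of size at least $\max(c+1,6)$ all of whose pairs have one color; $Y_F=\{\{y\}: y\in V(F)\setminus\bigcup_{X\in\mathcal X_F}X\}$. (For standard $F$, for each $X\in\mathcal X_F$ and $y$ outside $X$ all but at most one edge of $y\ast X$ have a common color, and between distinct $X_1,X_2\in\mathcal X_F$ all but a matching or a star-free remainder of $X_1\ast X_2$ have a common color; so the majority color below is well defined.) $E_F$ is the coloring on vertex set $\mathcal X_F\sqcup Y_F$ of pairs $\{v_1,v_2\}$ given by: no loop at elements of $Y_F$; $E_F(\{\{y_1\},\{y_2\}\})=F(\{y_1,y_2\})$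 for distinct elements of $Y_F$; the loop at $X\in\mathcal X_F$ gets the color of $F[X]$; every other pair $\{v_1,v_2\}$ gets the majority color among the edges of $v_1\ast v_2$ in $F$. A map $\varphi:[t]\to V(E_F)$ embeds $K_t^i$ (all edges color $i$) if $E_F(\{\varphi(u),\varphi(w)\})$ is defined and equals $i$ for all distinct $u,w\in[t]$ (in particular two vertices may share an image only if that image has a loop of color $i$). *)

theory Defs
  imports Main
begin

text \<open>A c-coloring: a finite vertex set V and a map F from 2-subsets of V to {1..c}.
  Values of F on other sets are irrelevant.\<close>
definition coloring :: "nat \<Rightarrow> 'a set \<Rightarrow> ('a set \<Rightarrow> nat) \<Rightarrow> bool" where
  "coloring c V F \<longleftrightarrow> finite V \<and> (\<forall>e. e \<subseteq> V \<and> card e = 2 \<longrightarrow> F e \<in> {1..c})"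

text \<open>Induced copy of a member of the family K-hat(3,1): monochromatic triangle x1 x2 x3
  of colour a, plus a vertex y whose three edges to the triangle have one of the three
  forbidden colour patterns (orderings of the triangle vertices are covered by the
  existential quantifier).\<close>
definition has_K31 :: "'a set \<Rightarrow> ('a set \<Rightarrow> nat) \<Rightarrow> bool" where
  "has_K31 V F \<longleftrightarrow> (\<exists>x1 x2 x3 y a.
     x1 \<in> V \<and> x2 \<in> V \<and> x3 \<in> V \<and> y \<in> V \<and> distinct [x1, x2, x3, y] \<and>
     F {x1, x2} = a \<and> F {x1, x3} = a \<and> F {x2, x3} = a \<and>
     ((F {y, x1} = a \<and> F {y, x2} = a \<and> F {y, x3} \<noteq> a) \<or>
      (F {y, x1} = a \<and> distinct [a, F {y, x2}, F {y, x3}]) \<or>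
      (F {y, x1} = F {y, x2} \<and> distinct [a, F {y, x1}, F {y, x3}])))"

definition has_K33 :: "'a set \<Rightarrow> ('a set \<Rightarrow> nat) \<Rightarrow> bool" where
  "has_K33 V F \<longleftrightarrow> (\<exists>x1 x2 x3 z1 z2 z3 a b d.
     x1 \<in> V \<and> x2 \<in> V \<and> x3 \<in> V \<and> z1 \<in> V \<and> z2 \<in> V \<and> z3 \<in> V \<and>
     distinct [x1, x2, x3, z1, z2, z3] \<and> distinct [a, b, d] \<and>
     F {x1, x2} = a \<and> F {x1, x3} = a \<and> F {x2, x3} = a \<and>
     F {z1, z2} = b \<and> F {z1, z3} = b \<and> F {z2, z3} = b \<and>
     (\<forall>x\<in>{x1, x2, x3}. \<forall>z\<in>{z1, z2, z3}. F {x, z} = d))"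

definition standard :: "nat \<Rightarrow> 'a set \<Rightarrow> ('a set \<Rightarrow> nat) \<Rightarrow> bool" where
  "standard c V F \<longleftrightarrow> coloring c V F \<and> \<not> has_K31 V F \<and> \<not> has_K33 V F"

definition mono_set :: "('a set \<Rightarrow> nat) \<Rightarrow> 'a set \<Rightarrow> bool" where
  "mono_set F X \<longleftrightarrow> (\<exists>i. \<forall>e. e \<subseteq> X \<and> card e = 2 \<longrightarrow> F e = i)"

definition set_color :: "('a set \<Rightarrow> nat) \<Rightarrow> 'a set \<Rightarrow> nat" where
  "set_color F X = (THE i. \<forall>e. e \<subseteq> X \<and> card e = 2 \<longrightarrow> F e = i)"

definition XF :: "nat \<Rightarrow> 'a set \<Rightarrow> ('a set \<Rightarrow> nat) \<Rightarrow> 'a set set" where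
  "XF c V F = {X. X \<subseteq> V \<and> card X \<ge> max (c + 1) 6 \<and> mono_set F X \<and>
      (\<forall>Y. X \<subset> Y \<and> Y \<subseteq> V \<and> card Y \<ge> max (c + 1) 6 \<and> mono_set F Y \<longrightarrow> False)}"

definition YF :: "nat \<Rightarrow> 'a set \<Rightarrow> ('a set \<Rightarrow> nat) \<Rightarrow> 'a set set" where
  "YF c V F = {{y} | y. y \<in> V \<and> y \<notin> \<Union>(XF c V F)}"

text \<open>Vertex set of E_F (X_F and Y_F are disjoint since members of X_F have size at least 6).\<close>
definition VE :: "nat \<Rightarrow> 'a set \<Rightarrow> ('a set \<Rightarrow> nat) \<Rightarrow> 'a set set" where
  "VE c V F = XF c V F \<union> YF c V F"

definition cross_count :: "('a set \<Rightarrow> nat) \<Rightarrow> 'a set \<Rightarrow> 'a set \<Rightarrow> nat \<Rightarrow> nat" where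
  "cross_count F v1 v2 j = card {e. \<exists>x\<in>v1. \<exists>y\<in>v2. x \<noteq> y \<and> e = {x, y} \<and> F e = j}"

definition maj_color :: "nat \<Rightarrow> ('a set \<Rightarrow> nat) \<Rightarrow> 'a set \<Rightarrow> 'a set \<Rightarrow> nat option" where
  "maj_color c F v1 v2 =
     (if \<exists>j\<in>{1..c}. \<forall>k\<in>{1..c}. k \<noteq> j \<longrightarrow> cross_count F v1 v2 k < cross_count F v1 v2 j
      then Some (THE j. j \<in> {1..c} \<and>
              (\<forall>k\<in>{1..c}. k \<noteq> j \<longrightarrow> cross_count F v1 v2 k < cross_count F v1 v2 j))
      else None)"

text \<open>The partially looped coloring E_F (None = undefined, e.g. no loop at Y_F elements).\<close>
definition EF :: "nat \<Rightarrow> 'a set \<Rightarrow> ('a set \<Rightarrow> nat) \<Rightarrow> 'a set \<Rightarrow> 'a set \<Rightarrow> nat option" where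
  "EF c V F v1 v2 =
     (if v1 = v2 then (if v1 \<in> XF c V F then Some (set_color F v1) else None)
      else if v1 \<in> YF c V F \<and> v2 \<in> YF c V F then Some (F (v1 \<union> v2))
      else maj_color c F v1 v2)"

definition embeds :: "nat \<Rightarrow> 'a set \<Rightarrow> ('a set \<Rightarrow> nat) \<Rightarrow> nat \<Rightarrow> nat \<Rightarrow> (nat \<Rightarrow> 'a set) \<Rightarrow> bool" where
  "embeds c V F t i \<phi> \<longleftrightarrow> (\<forall>u\<in>{1..t}. \<phi> u \<in> VE c V F) \<and>
     (\<forall>u\<in>{1..t}. \<forall>w\<in>{1..t}. u \<noteq> w \<longrightarrow> EF c V F (\<phi> u) (\<phi> w) = Some i)"

end

theory Submission
  imports Defs
begin



locale std =
  fixes c :: nat and V :: "'a set" and F :: "'a set \<Rightarrow> nat"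
  assumes c2: "c \<ge> 2" and st: "standard c V F"
begin

abbreviation "t \<equiv> max (c + 1) 6"

lemma finV: "finite V" using st unfolding standard_def coloring_def by auto

lemma col: "x \<in> V \<Longrightarrow> y \<in> V \<Longrightarrow> x \<noteq> y \<Longrightarrow> F {x, y} \<in> {1..c}"
  using st unfolding standard_def coloring_def by auto

lemma K31a:
  assumes "x1 \<in> V" "x2 \<in> V" "x3 \<in> V" "w \<in> V" "distinct [x1, x2, x3, w]"
    "F {x1, x2} = a" "F {x1, x3} = a" "F {x2, x3} = a"
    "F {w, x1} = a" "F {w, x2} = a" "F {w, x3} \<noteq> a"
  shows False
proof -
  have "has_K31 V F" unfolding has_K31_def
    apply (rule exI[of _ x1], rule exI[of _ x2], rule exI[of _ x3], rule exI[of _ w], rule exI[of _ a])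
    using assms by simp
  thus False using st unfolding standard_def by simp
qed

lemma K31c:
  assumes "x1 \<in> V" "x2 \<in> V" "x3 \<in> V" "w \<in> V" "distinct [x1, x2, x3, w]"
    "F {x1, x2} = a" "F {x1, x3} = a" "F {x2, x3} = a"
    "F {w, x1} = b" "F {w, x2} = b" "distinct [a, b, F {w, x3}]"
  shows False
proof -
  have "has_K31 V F" unfolding has_K31_def
    apply (rule exI[of _ x1], rule exI[of _ x2], rule exI[of _ x3], rule exI[of _ w], rule exI[of _ a])
    using assms by simp
  thus False using st unfolding standard_def by simp
qed

lemma XF_sub: "X \<in> XF c V F \<Longrightarrow> X \<subseteq> V" unfolding XF_def by auto
lemma XF_fin: "X \<in> XF c V F \<Longrightarrow> finite X" using XF_sub finV finite_subset by blast
lemma XF_card: "X \<in> XF c V F \<Longrightarrow> card X \<ge> t" unfolding XF_def by auto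
lemma XF_card6: "X \<in> XF c V F \<Longrightarrow> card X \<ge> 6" using XF_card by fastforce
lemma XF_cardc: "X \<in> XF c V F \<Longrightarrow> card X \<ge> c + 1" using XF_card by fastforce

lemma XF_color:
  assumes X: "X \<in> XF c V F" and "x \<in> X" "y \<in> X" "x \<noteq> y"
  shows "F {x, y} = set_color F X"
proof -
  from X obtain i where i: "\<forall>e. e \<subseteq> X \<and> card e = 2 \<longrightarrow> F e = i"
    unfolding XF_def mono_set_def by auto
  have "set_color F X = i" unfolding set_color_def
  proof (rule the_equality)
    show "\<forall>e. e \<subseteq> X \<and> card e = 2 \<longrightarrow> F e = i" by fact
    fix j assume j: "\<forall>e. e \<subseteq> X \<and> card e = 2 \<longrightarrow> F e = j"
    have "{x, y} \<subseteq> X" "card {x, y} = 2" using assms by auto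
    thus "j = i" using i j by metis
  qed
  moreover have "{x, y} \<subseteq> X" "card {x, y} = 2" using assms by auto
  ultimately show ?thesis using i by metis
qed

lemma XF_max:
  assumes X: "X \<in> XF c V F" and y: "y \<in> V" "y \<notin> X"
    and all: "\<forall>x\<in>X. F {x, y} = set_color F X"
  shows False
proof -
  have fin: "finite X" using XF_fin X by auto
  have "mono_set F (insert y X)" unfolding mono_set_def
  proof (intro exI allI impI)
    fix e assume e: "e \<subseteq> insert y X \<and> card e = 2"
    then obtain p q where pq: "e = {p, q}" "p \<noteq> q" by (meson card_2_iff)
    show "F e = set_color F X"
    proof (cases "p = y")
      case True then show ?thesis using pq e all by (auto simp: insert_commute)
    next
      case False
      show ?thesis
      proof (cases "q = y")
        case True then show ?thesis using pq e all by auto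
      next
        case False2: False
        then show ?thesis using pq e False XF_color[OF X] by auto
      qed
    qed
  qed
  moreover have "card (insert y X) \<ge> t" using XF_card[OF X] fin y by auto
  moreover have "X \<subset> insert y X" "insert y X \<subseteq> V" using y XF_sub[OF X] by auto
  ultimately show False using X unfolding XF_def by blast
qed

end


context std begin

lemma XF_two: "X \<in> XF c V F \<Longrightarrow> \<exists>x1 x2. x1 \<in> X \<and> x2 \<in> X \<and> x1 \<noteq> x2"
proof -
  assume X: "X \<in> XF c V F"
  hence c2: "card X \<ge> 2" using XF_card6 by fastforce
  hence "X \<noteq> {}" by auto
  then obtain x1 where x1: "x1 \<in> X" by auto
  have "finite X" using XF_fin X by auto
  hence "card (X - {x1}) \<ge> 1" using c2 x1 by simp
  hence "X - {x1} \<noteq> {}" by (metis card.empty not_one_le_zero)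
  then obtain x2 where "x2 \<in> X - {x1}" by auto
  thus ?thesis using x1 by auto
qed

lemma XF_colrange: "X \<in> XF c V F \<Longrightarrow> set_color F X \<in> {1..c}"
proof -
  assume X: "X \<in> XF c V F"
  then obtain x1 x2 where "x1 \<in> X" "x2 \<in> X" "x1 \<noteq> x2" using XF_two by blast
  thus ?thesis using XF_color[OF X] col[of x1 x2] XF_sub[OF X] by auto
qed

lemma VX:
  assumes X: "X \<in> XF c V F" and y: "y \<in> V" "y \<notin> X"
  shows "\<exists>d e. d \<noteq> set_color F X \<and> d \<in> {1..c} \<and> (\<forall>x\<in>X. x \<noteq> e \<longrightarrow> F {x, y} = d)
     \<and> (\<forall>x\<in>X. x = e \<longrightarrow> F {x, y} = set_color F X)"
proof -
  define a where "a = set_color F X"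
  have XV: "X \<subseteq> V" using XF_sub X by auto
  have one: False if "x1 \<in> X" "x2 \<in> X" "x1 \<noteq> x2" "F {x1, y} = a" "F {x2, y} = a" for x1 x2
  proof -
    have "\<forall>x3\<in>X. F {x3, y} = a"
    proof
      fix x3 assume x3: "x3 \<in> X"
      show "F {x3, y} = a"
      proof (rule ccontr)
        assume ne: "F {x3, y} \<noteq> a"
        hence "x3 \<noteq> x1" "x3 \<noteq> x2" using that by auto
        have f: "F {x1, x2} = a" "F {x1, x3} = a" "F {x2, x3} = a"
          using XF_color[OF X] that x3 \<open>x3 \<noteq> x1\<close> \<open>x3 \<noteq> x2\<close> a_def by auto
        have g: "F {y, x1} = a" "F {y, x2} = a" "F {y, x3} \<noteq> a" using that ne by (simp_all add: insert_commute)
        have "distinct [x1, x2, x3, y]" using that x3 y \<open>x3 \<noteq> x1\<close> \<open>x3 \<noteq> x2\<close> by auto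
        thus False using K31a[of x1 x2 x3 y a] f g that x3 XV y by blast
      qed
    qed
    thus False using XF_max[OF X y] a_def by auto
  qed
  obtain e where e: "\<forall>x\<in>X. x = e \<longrightarrow> F {x, y} = a" "\<forall>x\<in>X. F {x, y} = a \<longrightarrow> x = e"
  proof (cases "\<exists>x\<in>X. F {x, y} = a")
    case True
    then obtain x0 where "x0 \<in> X" "F {x0, y} = a" by auto
    have "\<forall>x\<in>X. F {x, y} = a \<longrightarrow> x = x0" using one \<open>x0 \<in> X\<close> \<open>F {x0, y} = a\<close> by blast
    thus ?thesis using that[of x0] \<open>F {x0, y} = a\<close> by blast
  next
    case False
    thus ?thesis using that[of y] y by auto
  qed
  define R where "R = X - {e}"
  have Rna: "\<forall>x\<in>R. F {x, y} \<noteq> a" using e R_def by auto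
  have fin: "finite X" using XF_fin X by auto
  have "card R \<ge> card X - 1" unfolding R_def using fin by (simp add: diff_le_mono card_Diff_singleton_if)
  hence cR: "card R \<ge> c" using XF_cardc[OF X] by linarith
  show ?thesis
  proof (cases "\<exists>x1\<in>R. \<exists>x2\<in>R. x1 \<noteq> x2 \<and> F {x1, y} = F {x2, y}")
    case True
    then obtain x1 x2 where x12: "x1 \<in> R" "x2 \<in> R" "x1 \<noteq> x2" "F {x1, y} = F {x2, y}" by auto
    define d where "d = F {x1, y}"
    have allR: "\<forall>x3\<in>R. F {x3, y} = d"
    proof
      fix x3 assume x3: "x3 \<in> R"
      show "F {x3, y} = d"
      proof (rule ccontr)
        assume ne: "F {x3, y} \<noteq> d"
        hence "x3 \<noteq> x1" "x3 \<noteq> x2" using x12 d_def by auto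
        have xs: "x1 \<in> X" "x2 \<in> X" "x3 \<in> X" using x12 x3 R_def by auto
        have f: "F {x1, x2} = a" "F {x1, x3} = a" "F {x2, x3} = a"
          using XF_color[OF X] xs x12 \<open>x3 \<noteq> x1\<close> \<open>x3 \<noteq> x2\<close> a_def by auto
        have g: "F {y, x1} = d" "F {y, x2} = d" using x12 d_def by (simp_all add: insert_commute)
        have "F {y, x3} \<noteq> a" "F {y, x3} \<noteq> d" "d \<noteq> a" using Rna x3 ne x12 d_def by (simp_all add: insert_commute)
        hence h: "distinct [a, d, F {y, x3}]" by auto
        have "distinct [x1, x2, x3, y]" using xs x12 y \<open>x3 \<noteq> x1\<close> \<open>x3 \<noteq> x2\<close> by auto
        thus False using K31c[of x1 x2 x3 y a d] f g h xs XV y by blast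
      qed
    qed
    have "d \<noteq> a" using Rna x12 d_def by auto
    moreover have "d \<in> {1..c}" using col[of x1 y] x12 R_def XV y d_def by auto
    moreover have "\<forall>x\<in>X. x \<noteq> e \<longrightarrow> F {x, y} = d" using allR R_def by blast
    ultimately show ?thesis using e(1) a_def by blast
  next
    case False
    hence inj: "inj_on (\<lambda>x. F {x, y}) R" unfolding inj_on_def by auto
    have "(\<lambda>x. F {x, y}) ` R \<subseteq> {1..c} - {a}"
    proof
      fix v assume "v \<in> (\<lambda>x. F {x, y}) ` R"
      then obtain x where x: "x \<in> R" "v = F {x, y}" by auto
      hence "x \<in> V" "x \<noteq> y" using R_def XV y by auto
      thus "v \<in> {1..c} - {a}" using col[of x y] y x Rna by auto
    qed
    hence "card R \<le> card ({1..c} - {a})" using card_inj_on_le[OF inj] by auto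
    moreover have "a \<in> {1..c}" using XF_colrange X a_def by auto
    ultimately have "card R \<le> c - 1" by auto
    thus ?thesis using cR c2 by auto
  qed
qed

end


context std begin

lemma YF_elem: "v \<in> YF c V F \<Longrightarrow> \<exists>y. v = {y} \<and> y \<in> V \<and> (\<forall>X\<in>XF c V F. y \<notin> X)"
  unfolding YF_def by auto

lemma XF_notYF: "X \<in> XF c V F \<Longrightarrow> X \<notin> YF c V F"
  using XF_card6 YF_elem by fastforce

lemma cc_set_sym: "{e. \<exists>x\<in>v1. \<exists>y\<in>v2. x \<noteq> y \<and> e = {x, y} \<and> F e = j}
   = {e. \<exists>x\<in>v2. \<exists>y\<in>v1. x \<noteq> y \<and> e = {x, y} \<and> F e = j}"
  by (auto, (metis insert_commute)+)

lemma cc_sym: "cross_count F v1 v2 j = cross_count F v2 v1 j"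
  unfolding cross_count_def using cc_set_sym by metis

lemma maj_sym: "maj_color c F v1 v2 = maj_color c F v2 v1"
proof -
  have eq: "cross_count F v1 v2 = cross_count F v2 v1" by (rule ext) (rule cc_sym)
  show ?thesis unfolding maj_color_def eq by (rule refl)
qed

lemma EF_sym: "EF c V F v1 v2 = EF c V F v2 v1"
  unfolding EF_def using maj_sym by (auto simp: Un_commute)

lemma EF_loop: "EF c V F v v = Some i \<Longrightarrow> v \<in> XF c V F \<and> set_color F v = i"
  unfolding EF_def by (auto split: if_splits)

lemma EF_X: "X \<in> XF c V F \<Longrightarrow> X \<noteq> v \<Longrightarrow> EF c V F X v = maj_color c F X v"
  unfolding EF_def using XF_notYF by auto

lemma EF_YY: "{y1} \<in> YF c V F \<Longrightarrow> {y2} \<in> YF c V F \<Longrightarrow> y1 \<noteq> y2 \<Longrightarrow> EF c V F {y1} {y2} = Some (F {y1, y2})"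
  unfolding EF_def by (auto simp: insert_commute)

lemma maj_Some:
  assumes "maj_color c F v1 v2 = Some i"
  shows "i \<in> {1..c} \<and> (\<forall>k\<in>{1..c}. k \<noteq> i \<longrightarrow> cross_count F v1 v2 k < cross_count F v1 v2 i)"
proof -
  define P where "P j = (j \<in> {1..c} \<and> (\<forall>k\<in>{1..c}. k \<noteq> j \<longrightarrow> cross_count F v1 v2 k < cross_count F v1 v2 j))" for j
  have ex: "\<exists>j. P j" and eq: "i = (THE j. P j)" using assms unfolding maj_color_def P_def
    by (auto split: if_splits)
  have "\<exists>!j. P j"
  proof -
    obtain j where j: "P j" using ex by auto
    have "j' = j" if "P j'" for j'
    proof (rule ccontr)
      assume "j' \<noteq> j"
      have "cross_count F v1 v2 j' < cross_count F v1 v2 j" using j that \<open>j' \<noteq> j\<close> unfolding P_def by auto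
      moreover have "cross_count F v1 v2 j < cross_count F v1 v2 j'" using j that \<open>j' \<noteq> j\<close> unfolding P_def by auto
      ultimately show False by linarith
    qed
    thus ?thesis using j by blast
  qed
  hence "P i" using eq theI' by metis
  thus ?thesis unfolding P_def by auto
qed

lemma cc_fin: "finite v1 \<Longrightarrow> finite v2 \<Longrightarrow> finite {e. \<exists>x\<in>v1. \<exists>y\<in>v2. x \<noteq> y \<and> e = {x, y} \<and> F e = j}"
proof -
  assume "finite v1" "finite v2"
  hence "finite ((\<lambda>(x, y). {x, y}) ` (v1 \<times> v2))" by auto
  moreover have "{e. \<exists>x\<in>v1. \<exists>y\<in>v2. x \<noteq> y \<and> e = {x, y} \<and> F e = j} \<subseteq> (\<lambda>(x, y). {x, y}) ` (v1 \<times> v2)"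
    by auto
  ultimately show ?thesis using finite_subset by blast
qed

lemma CXY:
  assumes X: "X \<in> XF c V F" and y: "y \<in> V" "y \<notin> X" and m: "maj_color c F X {y} = Some i"
  shows "i \<noteq> set_color F X \<and> (\<exists>e. \<forall>x\<in>X. x \<noteq> e \<longrightarrow> F {x, y} = i)"
proof -
  obtain d e where d: "d \<noteq> set_color F X" "d \<in> {1..c}" "\<forall>x\<in>X. x \<noteq> e \<longrightarrow> F {x, y} = d"
    using VX[OF X y] by blast
  have fin: "finite X" using XF_fin X by auto
  have "i = d"
  proof (rule ccontr)
    assume ne: "i \<noteq> d"
    have lt: "cross_count F X {y} d < cross_count F X {y} i" using maj_Some[OF m] d(2) ne by auto
    have "(\<lambda>x. {x, y}) ` (X - {e}) \<subseteq> {ee. \<exists>x\<in>X. \<exists>w\<in>{y}. x \<noteq> w \<and> ee = {x, w} \<and> F ee = d}"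
    proof
      fix ee assume "ee \<in> (\<lambda>x. {x, y}) ` (X - {e})"
      then obtain x where x: "x \<in> X" "x \<noteq> e" "ee = {x, y}" by auto
      hence "x \<noteq> y" "F ee = d" using y d by auto
      thus "ee \<in> {ee. \<exists>x\<in>X. \<exists>w\<in>{y}. x \<noteq> w \<and> ee = {x, w} \<and> F ee = d}" using x by blast
    qed
    note sub = this
    moreover have "card ((\<lambda>x. {x, y}) ` (X - {e})) = card (X - {e})"
    proof (rule card_image)
      show "inj_on (\<lambda>x. {x, y}) (X - {e})" unfolding inj_on_def using y by (auto simp: doubleton_eq_iff)
    qed
    moreover have "card (X - {e}) \<ge> 5"
    proof -
      have "card (X - {e}) \<ge> card X - 1" using fin by (simp add: diff_le_mono card_Diff_singleton_if)
      thus ?thesis using XF_card6[OF X] by linarith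
    qed
    moreover have "card ((\<lambda>x. {x, y}) ` (X - {e})) \<le> cross_count F X {y} d"
      unfolding cross_count_def by (rule card_mono[OF cc_fin[OF fin] sub]) simp
    ultimately have c5: "cross_count F X {y} d \<ge> 5" by linarith
    have "{ee. \<exists>x\<in>X. \<exists>w\<in>{y}. x \<noteq> w \<and> ee = {x, w} \<and> F ee = i} \<subseteq> {{e, y}}"
    proof
      fix ee assume "ee \<in> {ee. \<exists>x\<in>X. \<exists>w\<in>{y}. x \<noteq> w \<and> ee = {x, w} \<and> F ee = i}"
      then obtain x where x: "x \<in> X" "ee = {x, y}" "F ee = i" by auto
      have "x = e" using d(3) x ne by metis
      thus "ee \<in> {{e, y}}" using x by simp
    qed
    hence "cross_count F X {y} i \<le> card {{e, y}}" unfolding cross_count_def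
      by (intro card_mono) auto
    hence "cross_count F X {y} i \<le> 1" by simp
    thus False using lt c5 by linarith
  qed
  thus ?thesis using d by blast
qed

end



lemma pick: "finite T \<Longrightarrow> card T < card S \<Longrightarrow> \<exists>x\<in>S. x \<notin> T"
  by (metis card_mono not_le subsetI)

lemma pick2: "card S \<ge> 3 \<Longrightarrow> \<exists>x\<in>S. x \<noteq> p \<and> x \<noteq> q"
proof -
  assume "card S \<ge> 3"
  moreover have "card {p, q} \<le> 2" by (simp add: card_insert_if)
  ultimately obtain x where "x \<in> S" "x \<notin> {p, q}" using pick[of "{p, q}" S] by fastforce
  thus ?thesis by auto
qed

context std begin

lemma XF_sub_not: "X1 \<in> XF c V F \<Longrightarrow> X2 \<in> XF c V F \<Longrightarrow> X1 \<noteq> X2 \<Longrightarrow> X2 - X1 \<noteq> {}"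
proof
  assume X1: "X1 \<in> XF c V F" and X2: "X2 \<in> XF c V F" and ne: "X1 \<noteq> X2" and e: "X2 - X1 = {}"
  hence "X2 \<subset> X1" by auto
  moreover have "X1 \<subseteq> V" "card X1 \<ge> t" "mono_set F X1" using X1 unfolding XF_def by auto
  ultimately show False using X2 unfolding XF_def by blast
qed

lemma XX_int:
  assumes X1: "X1 \<in> XF c V F" and X2: "X2 \<in> XF c V F" and ne: "X1 \<noteq> X2"
  shows "card (X1 \<inter> X2) \<le> 1"
proof -
  have fin: "finite (X1 \<inter> X2)" using XF_fin X1 by auto
  have "\<forall>z1\<in>X1 \<inter> X2. \<forall>z2\<in>X1 \<inter> X2. z1 = z2"
  proof (intro ballI, rule ccontr)
    fix z1 z2 assume z: "z1 \<in> X1 \<inter> X2" "z2 \<in> X1 \<inter> X2" "z1 \<noteq> z2"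
    obtain y where y: "y \<in> X2" "y \<notin> X1" using XF_sub_not[OF X1 X2 ne] by auto
    have yV: "y \<in> V" using y XF_sub X2 by auto
    obtain d e where d: "d \<noteq> set_color F X1" "\<forall>x\<in>X1. x \<noteq> e \<longrightarrow> F {x, y} = d"
      using VX[OF X1 yV y(2)] by blast
    have ab: "set_color F X1 = set_color F X2" using XF_color[OF X1] XF_color[OF X2] z by force
    have "F {z1, y} = set_color F X1" "F {z2, y} = set_color F X1"
      using XF_color[OF X2] z y ab by auto
    hence "z1 = e" "z2 = e" using d z by auto
    thus False using z by auto
  qed
  thus ?thesis using card_le_Suc0_iff_eq[OF fin] by simp
qed

lemma XX_sizes:
  assumes X1: "X1 \<in> XF c V F" and X2: "X2 \<in> XF c V F" and ne: "X1 \<noteq> X2"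
  shows "card (X1 - X2) \<ge> 5" "X1 \<inter> X2 = {} \<Longrightarrow> card (X1 - X2) \<ge> 6"
proof -
  have fin: "finite (X1 \<inter> X2)" using XF_fin X1 by auto
  have "card (X1 - X2) = card X1 - card (X1 \<inter> X2)" using card_Diff_subset_Int[OF fin] .
  thus "card (X1 - X2) \<ge> 5" using XX_int[OF X1 X2 ne] XF_card6[OF X1] by linarith
  show "X1 \<inter> X2 = {} \<Longrightarrow> card (X1 - X2) \<ge> 6" using XF_card6[OF X1]
    by (simp add: Diff_triv)
qed

end


context std begin

lemma XX_struct:
  assumes X1: "X1 \<in> XF c V F" and X2: "X2 \<in> XF c V F" and ne: "X1 \<noteq> X2"
  shows "\<exists>D s. D \<noteq> set_color F X1 \<and> D \<in> {1..c} \<and>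
    (\<forall>y\<in>X2 - X1. (y \<noteq> s \<or> X1 \<inter> X2 \<noteq> {}) \<longrightarrow> (\<exists>e. \<forall>x\<in>X1. x \<noteq> e \<longrightarrow> F {x, y} = D))"
proof -
  define a where "a = set_color F X1"
  define b where "b = set_color F X2"
  have XV1: "X1 \<subseteq> V" and XV2: "X2 \<subseteq> V" using XF_sub X1 X2 by auto
  define P1 where "P1 y d e \<longleftrightarrow> d \<noteq> a \<and> d \<in> {1..c} \<and> (\<forall>x\<in>X1. x \<noteq> e \<longrightarrow> F {x, y} = d)
     \<and> (\<forall>x\<in>X1. x = e \<longrightarrow> F {x, y} = a)" for y d e
  define P2 where "P2 x d e \<longleftrightarrow> d \<noteq> b \<and> d \<in> {1..c} \<and> (\<forall>w\<in>X2. w \<noteq> e \<longrightarrow> F {w, x} = d)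
     \<and> (\<forall>w\<in>X2. w = e \<longrightarrow> F {w, x} = b)" for x d e
  have ex1: "\<exists>d e. P1 y d e" if "y \<in> X2 - X1" for y
    using VX[OF X1, of y] that XV2 unfolding P1_def a_def by blast
  have ex2: "\<exists>d e. P2 x d e" if "x \<in> X1 - X2" for x
    using VX[OF X2, of x] that XV1 unfolding P2_def b_def by blast
  define dd where "dd y = (SOME d. \<exists>e. P1 y d e)" for y
  define ee where "ee y = (SOME e. P1 y (dd y) e)" for y
  define dd2 where "dd2 x = (SOME d. \<exists>e. P2 x d e)" for x
  define ee2 where "ee2 x = (SOME e. P2 x (dd2 x) e)" for x
  have H1: "P1 y (dd y) (ee y)" if "y \<in> X2 - X1" for y
  proof -
    have "\<exists>e. P1 y (dd y) e" unfolding dd_def using someI_ex[OF ex1[OF that]] .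
    thus ?thesis unfolding ee_def by (rule someI_ex)
  qed
  have H2: "P2 x (dd2 x) (ee2 x)" if "x \<in> X1 - X2" for x
  proof -
    have "\<exists>e. P2 x (dd2 x) e" unfolding dd2_def using someI_ex[OF ex2[OF that]] .
    thus ?thesis unfolding ee2_def by (rule someI_ex)
  qed
  have cA: "card (X1 - X2) \<ge> 3" using XX_sizes(1)[OF X1 X2 ne] by linarith
  have cB: "card (X2 - X1) \<ge> 3" using XX_sizes(1)[OF X2 X1 ne[symmetric]] by linarith
  have K2: False if y: "y \<in> X2 - X1" "y' \<in> X2 - X1" "y \<noteq> y'" "dd y = b" "dd y' = b" for y y'
  proof -
    obtain x where x: "x \<in> X1 - X2" "x \<noteq> ee y" "x \<noteq> ee y'" using pick2[OF cA] by blast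
    have "F {x, y} = b" "F {x, y'} = b" using H1[OF y(1)] H1[OF y(2)] x y unfolding P1_def by auto
    hence f: "F {y, x} = b" "F {y', x} = b" by (simp_all add: insert_commute)
    have "y = ee2 x" using H2[OF x(1)] f y(1) unfolding P2_def by auto
    moreover have "y' = ee2 x" using H2[OF x(1)] f y(2) unfolding P2_def by auto
    ultimately show False using y by simp
  qed
  have K: "dd y = dd y'" if y: "y \<in> X2 - X1" "y' \<in> X2 - X1" "dd y \<noteq> b" "dd y' \<noteq> b" for y y'
  proof -
    obtain x where x: "x \<in> X1 - X2" "x \<noteq> ee y" "x \<noteq> ee y'" using pick2[OF cA] by blast
    have "F {x, y} = dd y" "F {x, y'} = dd y'" using H1[OF y(1)] H1[OF y(2)] x unfolding P1_def by auto
    hence f: "F {y, x} = dd y" "F {y', x} = dd y'" by (simp_all add: insert_commute)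
    have "F {y, x} = dd2 x" using H2[OF x(1)] f y unfolding P2_def by auto
    moreover have "F {y', x} = dd2 x" using H2[OF x(1)] f y unfolding P2_def by auto
    ultimately show ?thesis using f by simp
  qed
  obtain y1 where y1: "y1 \<in> X2 - X1" using XF_sub_not[OF X1 X2 ne] by auto
  obtain y2 where y2: "y2 \<in> X2 - X1" "y2 \<noteq> y1" using pick2[OF cB] by blast
  have ovl: "dd y \<noteq> b" if ov: "X1 \<inter> X2 \<noteq> {}" and y: "y \<in> X2 - X1" for y
  proof (cases "a = b")
    case True
    thus ?thesis using H1[OF y] unfolding P1_def by auto
  next
    case False
    obtain z where z: "z \<in> X1" "z \<in> X2" using ov by auto
    have all: "dd w = b" if w: "w \<in> X2 - X1" for w
    proof -
      have "z \<noteq> w" using z w by auto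
      hence fz: "F {z, w} = b" using XF_color[OF X2] z w b_def by auto
      have "z \<noteq> ee w" using H1[OF w] fz False z unfolding P1_def by auto
      thus ?thesis using H1[OF w] fz z unfolding P1_def by auto
    qed
    show ?thesis using K2[OF y1 y2(1) y2(2)[symmetric] all[OF y1] all[OF y2(1)]] by simp
  qed
  obtain y0 where y0: "y0 \<in> X2 - X1" "dd y0 \<noteq> b"
  proof (cases "dd y1 = b")
    case True
    hence "dd y2 \<noteq> b" using K2[OF y1 y2(1)] y2(2) by auto
    thus ?thesis using that y2 by blast
  next
    case False
    thus ?thesis using that y1 by blast
  qed
  define D where "D = dd y0"
  define s where "s = (SOME y. y \<in> X2 - X1 \<and> dd y = b)"
  have gen: "\<exists>e. \<forall>x\<in>X1. x \<noteq> e \<longrightarrow> F {x, y} = D"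
    if y: "y \<in> X2 - X1" "y \<noteq> s \<or> X1 \<inter> X2 \<noteq> {}" for y
  proof -
    have nb: "dd y \<noteq> b"
    proof
      assume yb: "dd y = b"
      hence "X1 \<inter> X2 = {}" using ovl y(1) by auto
      hence "y \<noteq> s" using y by auto
      have "s \<in> X2 - X1 \<and> dd s = b" unfolding s_def using someI[of "\<lambda>y. y \<in> X2 - X1 \<and> dd y = b" y] y yb by blast
      thus False using K2[OF y(1), of s] \<open>y \<noteq> s\<close> yb by blast
    qed
    have "dd y = D" using K[OF y(1) y0(1) nb y0(2)] D_def by simp
    thus ?thesis using H1[OF y(1)] unfolding P1_def by blast
  qed
  have "D \<noteq> a" "D \<in> {1..c}" using H1[OF y0(1)] D_def unfolding P1_def by auto
  thus ?thesis using gen a_def by blast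
qed

end



lemma ar1: "(nA::nat) \<ge> 5 \<Longrightarrow> nB \<ge> 5 \<Longrightarrow> nB * (nA - 1) > nA + 1 + nB + nB"
proof -
  assume a: "nA \<ge> 5" "nB \<ge> 5"
  have e: "nA - 1 = 4 + (nA - 5)" using a by simp
  have "nB * (nA - 1) = nB * 4 + nB * (nA - 5)" unfolding e by (rule distrib_left)
  moreover have "nB * (nA - 5) \<ge> 5 * (nA - 5)" using a by (intro mult_right_mono) auto
  ultimately show ?thesis using a by linarith
qed

lemma ar2: "(nA::nat) \<ge> 6 \<Longrightarrow> nB \<ge> 6 \<Longrightarrow> (nB - 1) * (nA - 1) > nA + nB"
proof -
  assume a: "nA \<ge> 6" "nB \<ge> 6"
  have e: "nA - 1 = 5 + (nA - 6)" using a by simp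
  have "(nB - 1) * (nA - 1) = (nB - 1) * 5 + (nB - 1) * (nA - 6)" unfolding e by (rule distrib_left)
  moreover have "(nB - 1) * (nA - 6) \<ge> 5 * (nA - 6)" using a by (intro mult_right_mono) auto
  ultimately show ?thesis using a by linarith
qed

context std begin

lemma CXX:
  assumes X1: "X1 \<in> XF c V F" and X2: "X2 \<in> XF c V F" and ne: "X1 \<noteq> X2"
    and m: "maj_color c F X1 X2 = Some i"
  shows "i \<noteq> set_color F X1 \<and> (\<exists>s. \<forall>y\<in>X2 - X1. y \<noteq> s \<longrightarrow> (\<exists>e. \<forall>x\<in>X1. x \<noteq> e \<longrightarrow> F {x, y} = i))"
proof -
  obtain D s where Ds: "D \<noteq> set_color F X1" "D \<in> {1..c}"
    "\<forall>y\<in>X2 - X1. (y \<noteq> s \<or> X1 \<inter> X2 \<noteq> {}) \<longrightarrow> (\<exists>e. \<forall>x\<in>X1. x \<noteq> e \<longrightarrow> F {x, y} = D)"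
    using XX_struct[OF X1 X2 ne] by blast
  define A where "A = X1 - X2"
  define B where "B = X2 - X1"
  define B' where "B' = {y\<in>B. y \<noteq> s \<or> X1 \<inter> X2 \<noteq> {}}"
  define ee where "ee y = (SOME e. \<forall>x\<in>X1. x \<noteq> e \<longrightarrow> F {x, y} = D)" for y
  have gen: "\<forall>x\<in>X1. x \<noteq> ee y \<longrightarrow> F {x, y} = D" if "y \<in> B'" for y
    unfolding ee_def by (rule someI_ex) (use Ds(3) that B'_def B_def in blast)
  define T where "T j = {e. \<exists>x\<in>X1. \<exists>y\<in>X2. x \<noteq> y \<and> e = {x, y} \<and> F e = j}" for j
  have fin1: "finite X1" and fin2: "finite X2" using XF_fin X1 X2 by auto
  have finA: "finite A" and finB: "finite B" and finB': "finite B'" using fin1 fin2 A_def B_def B'_def by auto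
  have cA: "card A \<ge> 5" using XX_sizes(1)[OF X1 X2 ne] A_def by simp
  have cB: "card B \<ge> 5" using XX_sizes(1)[OF X2 X1 ne[symmetric]] B_def by simp
  have "i = D"
  proof (rule ccontr)
    assume iD: "i \<noteq> D"
    have "cross_count F X1 X2 D < cross_count F X1 X2 i" using maj_Some[OF m] Ds(2) iD[symmetric] by blast
    hence lt: "card (T D) < card (T i)" unfolding cross_count_def T_def .
    define P where "P = (SIGMA y:B'. A - {ee y})"
    have Psub: "(\<lambda>(y, x). {x, y}) ` P \<subseteq> T D"
    proof
      fix e assume "e \<in> (\<lambda>(y, x). {x, y}) ` P"
      then obtain y x where yx: "y \<in> B'" "x \<in> A" "x \<noteq> ee y" "e = {x, y}" unfolding P_def by auto
      have "x \<in> X1" "y \<in> X2" "x \<noteq> y" using yx A_def B_def B'_def by auto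
      moreover have "F e = D" using gen[OF yx(1)] yx \<open>x \<in> X1\<close> by auto
      ultimately show "e \<in> T D" unfolding T_def using yx(4) by blast
    qed
    have inj: "inj_on (\<lambda>(y, x). {x, y}) P"
    proof (rule inj_onI)
      fix p q assume p: "p \<in> P" and q: "q \<in> P" and eq: "(\<lambda>(y, x). {x, y}) p = (\<lambda>(y, x). {x, y}) q"
      obtain y x where pp: "p = (y, x)" "y \<in> B" "x \<in> A" using p unfolding P_def B'_def by auto
      obtain y' x' where qq: "q = (y', x')" "y' \<in> B" "x' \<in> A" using q unfolding P_def B'_def by auto
      have "{x, y} = {x', y'}" using eq pp qq by simp
      moreover have "x \<noteq> y'" "y \<noteq> x'" using pp qq A_def B_def by auto
      ultimately have "x = x'" "y = y'" by (auto simp: doubleton_eq_iff)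
      thus "p = q" using pp qq by simp
    qed
    have cP: "card P = (\<Sum>y\<in>B'. card (A - {ee y}))" unfolding P_def using finB' finA by simp
    have "(\<Sum>y\<in>B'. card (A - {ee y})) \<ge> card B' * (card A - 1)"
    proof -
      have "card (A - {ee y}) \<ge> card A - 1" for y using finA by (simp add: diff_le_mono card_Diff_singleton_if)
      thus ?thesis using sum_bounded_below[of B' "card A - 1" "\<lambda>y. card (A - {ee y})"] by simp
    qed
    moreover have "card P \<le> card (T D)"
    proof -
      have "finite (T D)" unfolding T_def using cc_fin[OF fin1 fin2] .
      hence "card ((\<lambda>(y, x). {x, y}) ` P) \<le> card (T D)" using Psub card_mono by blast
      thus ?thesis using card_image[OF inj] by simp
    qed
    ultimately have low: "card (T D) \<ge> card B' * (card A - 1)" using cP by linarith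
    define Ex where "Ex = (\<lambda>y. {ee y, y}) ` B'"
    have "B' \<subseteq> B" unfolding B'_def by blast
    hence "card B' \<le> card B" using card_mono[OF finB] by blast
    hence cEx: "card Ex \<le> card B" unfolding Ex_def using card_image_le[OF finB', of "\<lambda>y. {ee y, y}"] by linarith
    show False
    proof (cases "X1 \<inter> X2 = {}")
      case True
      define S where "S = (\<lambda>x. {x, s}) ` A"
      have cS: "card S \<le> card A" unfolding S_def using card_image_le[OF finA] by blast
      have "T i \<subseteq> S \<union> Ex"
      proof
        fix e assume "e \<in> T i"
        then obtain x y where xy: "x \<in> X1" "y \<in> X2" "x \<noteq> y" "e = {x, y}" "F e = i" unfolding T_def by auto
        have xA: "x \<in> A" and yB: "y \<in> B" using xy True A_def B_def by auto
        show "e \<in> S \<union> Ex"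
        proof (cases "y = s")
          case True
          thus ?thesis using xA xy S_def by auto
        next
          case False
          hence "y \<in> B'" using yB B'_def by auto
          hence "x = ee y" using gen[of y] xy iD by fastforce
          thus ?thesis using \<open>y \<in> B'\<close> xy Ex_def by auto
        qed
      qed
      moreover have "finite (S \<union> Ex)" using finA finB' S_def Ex_def by blast
      ultimately have "card (T i) \<le> card (S \<union> Ex)" by (rule card_mono[rotated])
      hence up: "card (T i) \<le> card S + card Ex" using card_Un_le[of S Ex] by (rule order_trans)
      have cB': "card B' \<ge> card B - 1"
      proof -
        have "B - {s} \<subseteq> B'" unfolding B'_def by blast
        hence "card (B - {s}) \<le> card B'" using finB' card_mono by blast
        moreover have "card (B - {s}) \<ge> card B - 1" using finB by (simp add: diff_le_mono card_Diff_singleton_if)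
        ultimately show ?thesis by (rule le_trans[rotated])
      qed
      have cA6: "card A \<ge> 6" using XX_sizes(2)[OF X1 X2 ne True] A_def by simp
      have "X2 \<inter> X1 = {}" using True by blast
      hence cB6: "card B \<ge> 6" using XX_sizes(2)[OF X2 X1 ne[symmetric]] B_def by simp
      have m1: "card B' * (card A - 1) \<ge> (card B - 1) * (card A - 1)"
        using cB' by (rule mult_right_mono) simp
      have "card S + card Ex \<le> card A + card B" using cS cEx by (rule add_mono)
      also have "\<dots> < (card B - 1) * (card A - 1)" using ar2[OF cA6 cB6] .
      also have "\<dots> \<le> card B' * (card A - 1)" using m1 .
      also have "\<dots> \<le> card (T D)" using low .
      finally have "card S + card Ex < card (T D)" .
      thus False using up lt by linarith
    next
      case False
      then obtain z where z: "z \<in> X1 \<inter> X2" by auto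
      have I: "X1 \<inter> X2 = {z}" using XX_int[OF X1 X2 ne] z card_le_Suc0_iff_eq[of "X1 \<inter> X2"] fin1 by auto
      define Z where "Z = (\<lambda>w. {z, w}) ` (A \<union> B \<union> {z})"
      have finU: "finite (A \<union> B \<union> {z})" using finA finB by auto
      have "card Z \<le> card (A \<union> B \<union> {z})" unfolding Z_def by (rule card_image_le[OF finU])
      also have "\<dots> \<le> card (A \<union> B) + card {z}" by (rule card_Un_le)
      also have "\<dots> \<le> card A + card B + 1" using card_Un_le[of A B] by simp
      finally have cZ: "card Z \<le> card A + card B + 1" .
      have B'B: "B' = B" using False B'_def by auto
      have "T i \<subseteq> Z \<union> Ex"
      proof
        fix e assume "e \<in> T i"
        then obtain x y where xy: "x \<in> X1" "y \<in> X2" "x \<noteq> y" "e = {x, y}" "F e = i" unfolding T_def by auto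
        show "e \<in> Z \<union> Ex"
        proof (cases "x \<in> X2")
          case True
          hence "x = z" using I xy by auto
          moreover have "y \<in> A \<union> B \<union> {z}" using xy A_def B_def I by auto
          ultimately show ?thesis using xy Z_def by auto
        next
          case xn: False
          show ?thesis
          proof (cases "y \<in> X1")
            case True
            hence "y = z" using I xy by auto
            moreover have "x \<in> A \<union> B \<union> {z}" using xy A_def B_def I by auto
            ultimately have "e \<in> Z" using xy Z_def by (auto simp: insert_commute)
            thus ?thesis by auto
          next
            case False
            hence "y \<in> B'" using xy B'B B_def by auto
            hence "x = ee y" using gen[of y] xy iD by fastforce
            thus ?thesis using \<open>y \<in> B'\<close> xy Ex_def by auto
          qed
        qed
      qed
      moreover have "finite (Z \<union> Ex)" using finU finB' Z_def Ex_def by blast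
      ultimately have "card (T i) \<le> card (Z \<union> Ex)" by (rule card_mono[rotated])
      hence "card (T i) \<le> card Z + card Ex" using card_Un_le[of Z Ex] by (rule order_trans)
      hence up: "card (T i) \<le> card Z + card Ex" .
      have "card Z + card Ex \<le> (card A + card B + 1) + card B" using cZ cEx by (rule add_mono)
      also have "\<dots> < card B * (card A - 1)" using ar1[OF cA cB] by simp
      also have "\<dots> \<le> card (T D)" using low B'B by simp
      finally have "card Z + card Ex < card (T D)" .
      thus False using up lt by linarith
    qed
  qed
  moreover have "\<forall>y\<in>X2 - X1. y \<noteq> s \<longrightarrow> (\<exists>e. \<forall>x\<in>X1. x \<noteq> e \<longrightarrow> F {x, y} = D)" using Ds(3) by blast
  ultimately show ?thesis using Ds(1) by blast
qed

end



lemma pick22: "card S \<ge> 4 \<Longrightarrow> \<exists>x x'. x \<in> S \<and> x' \<in> S \<and> x \<noteq> x' \<and> x \<noteq> p \<and> x \<noteq> q \<and> x' \<noteq> p \<and> x' \<noteq> q"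
proof -
  assume a: "card S \<ge> 4"
  hence fin: "finite S" by (metis card.infinite not_numeral_le_zero)
  obtain x where x: "x \<in> S" "x \<noteq> p" "x \<noteq> q" using pick2[of S p q] a by auto
  have "card (S - {x}) \<ge> 3" using a x fin by simp
  then obtain x' where "x' \<in> S - {x}" "x' \<noteq> p" "x' \<noteq> q" using pick2[of "S - {x}" p q] by auto
  thus ?thesis using x by blast
qed

context std begin

lemma sw: "F {a, b} = j \<Longrightarrow> F {b, a} = j" by (metis insert_commute)

lemma gXY:
  assumes X: "X \<in> XF c V F" and y: "{y} \<in> YF c V F" and m: "EF c V F X {y} = Some i"
  shows "i \<noteq> set_color F X \<and> (\<exists>e. \<forall>x\<in>X. x \<noteq> e \<longrightarrow> F {x, y} = i)"
proof -
  have "y \<in> V" "y \<notin> X" using YF_elem[OF y] X by auto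
  moreover have "X \<noteq> {y}" using \<open>y \<notin> X\<close> by auto
  ultimately show ?thesis using CXY[OF X] m EF_X[OF X] by simp
qed

lemma gXX:
  assumes X1: "X1 \<in> XF c V F" and X2: "X2 \<in> XF c V F" and ne: "X1 \<noteq> X2" and m: "EF c V F X1 X2 = Some i"
  shows "i \<noteq> set_color F X1 \<and> (\<exists>s. \<forall>y\<in>X2 - X1. y \<noteq> s \<longrightarrow> (\<exists>e. \<forall>x\<in>X1. x \<noteq> e \<longrightarrow> F {x, y} = i))"
  using CXX[OF X1 X2 ne] m EF_X[OF X1 ne] by simp

lemma VE_cases: "v \<in> VE c V F \<Longrightarrow> v \<in> XF c V F \<or> (\<exists>y. v = {y} \<and> {y} \<in> YF c V F)"
  unfolding VE_def using YF_elem by blast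

lemma L1:
  assumes W: "W \<in> XF c V F" and v: "v \<in> VE c V F" "v \<noteq> W" and m: "EF c V F W v = Some (set_color F W)"
  shows False
  using VE_cases[OF v(1)]
proof
  assume "v \<in> XF c V F"
  thus False using gXX[OF W _ v(2)[symmetric] m] by blast
next
  assume "\<exists>y. v = {y} \<and> {y} \<in> YF c V F"
  then obtain y where "v = {y}" "{y} \<in> YF c V F" by auto
  thus False using gXY[OF W _ ] m by blast
qed

lemma caseD:
  assumes X: "X \<in> XF c V F" and y1: "{y1} \<in> YF c V F" and y2: "{y2} \<in> YF c V F" and ne: "y1 \<noteq> y2"
    and m1: "EF c V F X {y1} = Some i" and m2: "EF c V F X {y2} = Some i" and m3: "EF c V F {y1} {y2} = Some i"
  shows False
proof -
  obtain e1 where e1: "i \<noteq> set_color F X" "\<forall>x\<in>X. x \<noteq> e1 \<longrightarrow> F {x, y1} = i" using gXY[OF X y1 m1] by blast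
  obtain e2 where e2: "\<forall>x\<in>X. x \<noteq> e2 \<longrightarrow> F {x, y2} = i" using gXY[OF X y2 m2] by blast
  have f12: "F {y1, y2} = i" using m3 EF_YY[OF y1 y2 ne] by simp
  have "card X \<ge> 4" using XF_card6[OF X] by simp
  then obtain x x' where xx: "x \<in> X" "x' \<in> X" "x \<noteq> x'" "x \<noteq> e1" "x \<noteq> e2" "x' \<noteq> e1" "x' \<noteq> e2"
    using pick22 by metis
  have yy: "y1 \<in> V" "y1 \<notin> X" "y2 \<in> V" "y2 \<notin> X" using YF_elem[OF y1] YF_elem[OF y2] X by auto
  have XV: "x \<in> V" "x' \<in> V" using xx XF_sub[OF X] by auto
  have a1: "F {x, y1} = i" "F {x, y2} = i" "F {x', y1} = i" "F {x', y2} = i"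
    using e1 e2 xx by auto
  have a: "F {y1, x} = i" "F {y2, x} = i" "F {x', y1} = i" "F {x', y2} = i"
    using sw[OF a1(1)] sw[OF a1(2)] a1 by auto
  have b: "F {x', x} \<noteq> i" using XF_color[OF X xx(2) xx(1)] xx e1 by simp
  have "distinct [y1, y2, x, x']" using yy xx ne by auto
  thus False using K31a[of y1 y2 x x' i] f12 a b yy XV by blast
qed

lemma caseB:
  assumes X1: "X1 \<in> XF c V F" and X2: "X2 \<in> XF c V F" and ne: "X1 \<noteq> X2" and y: "{y} \<in> YF c V F"
    and m1: "EF c V F X1 X2 = Some i" and m2: "EF c V F X1 {y} = Some i" and m3: "EF c V F X2 {y} = Some i"
  shows False
proof -
  obtain s where s: "i \<noteq> set_color F X1" "\<forall>w\<in>X2 - X1. w \<noteq> s \<longrightarrow> (\<exists>e. \<forall>x\<in>X1. x \<noteq> e \<longrightarrow> F {x, w} = i)"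
    using gXX[OF X1 X2 ne m1] by blast
  obtain e1 where e1: "\<forall>x\<in>X1. x \<noteq> e1 \<longrightarrow> F {x, y} = i" using gXY[OF X1 y m2] by blast
  obtain e2 where e2: "\<forall>x\<in>X2. x \<noteq> e2 \<longrightarrow> F {x, y} = i" using gXY[OF X2 y m3] by blast
  have "card (X2 - X1) \<ge> 3" using XX_sizes(1)[OF X2 X1 ne[symmetric]] by simp
  then obtain w where w: "w \<in> X2 - X1" "w \<noteq> s" "w \<noteq> e2" using pick2 by metis
  obtain f where f: "\<forall>x\<in>X1. x \<noteq> f \<longrightarrow> F {x, w} = i" using s w by blast
  have "card X1 \<ge> 4" using XF_card6[OF X1] by simp
  then obtain x x' where xx: "x \<in> X1" "x' \<in> X1" "x \<noteq> x'" "x \<noteq> e1" "x \<noteq> f" "x' \<noteq> e1" "x' \<noteq> f"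
    using pick22 by metis
  have yy: "y \<in> V" "y \<notin> X1" "y \<notin> X2" using YF_elem[OF y] X1 X2 by auto
  have V: "x \<in> V" "x' \<in> V" "w \<in> V" using xx w XF_sub[OF X1] XF_sub[OF X2] by auto
  have a1: "F {w, y} = i" "F {x, y} = i" "F {x, w} = i" "F {x', y} = i" "F {x', w} = i"
    using e1 e2 f xx w by auto
  have a: "F {y, w} = i" "F {y, x} = i" "F {w, x} = i" "F {x', y} = i" "F {x', w} = i"
    using sw[OF a1(1)] sw[OF a1(2)] sw[OF a1(3)] a1 by auto
  have b: "F {x', x} \<noteq> i" using XF_color[OF X1 xx(2) xx(1)] xx s by simp
  have "distinct [y, w, x, x']" using yy xx w by auto
  thus False using K31a[of y w x x' i] a b yy V by blast
qed

lemma int_small: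
  assumes X1: "X1 \<in> XF c V F" and X2: "X2 \<in> XF c V F" and X3: "X3 \<in> XF c V F"
    and ne: "X3 \<noteq> X1" "X3 \<noteq> X2"
  shows "card (X3 - X1 - X2) \<ge> 4"
proof -
  have fin: "finite X3" using XF_fin X3 by auto
  have eq: "X3 - X1 - X2 = X3 - ((X3 \<inter> X1) \<union> (X3 \<inter> X2))" by blast
  have "card ((X3 \<inter> X1) \<union> (X3 \<inter> X2)) \<le> 2"
    using card_Un_le[of "X3 \<inter> X1" "X3 \<inter> X2"] XX_int[OF X3 X1 ne(1)] XX_int[OF X3 X2 ne(2)] by linarith
  moreover have "card X3 - card ((X3 \<inter> X1) \<union> (X3 \<inter> X2)) \<le> card (X3 - X1 - X2)"
    unfolding eq using fin by (intro diff_card_le_card_Diff) auto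
  ultimately show ?thesis using XF_card6[OF X3] by linarith
qed

lemma caseC:
  assumes X1: "X1 \<in> XF c V F" and X2: "X2 \<in> XF c V F" and X3: "X3 \<in> XF c V F"
    and ne: "X1 \<noteq> X2" "X1 \<noteq> X3" "X2 \<noteq> X3"
    and m1: "EF c V F X1 X2 = Some i" and m2: "EF c V F X1 X3 = Some i" and m3: "EF c V F X2 X3 = Some i"
  shows False
proof -
  obtain s21 where s21: "i \<noteq> set_color F X1" "\<forall>w\<in>X2 - X1. w \<noteq> s21 \<longrightarrow> (\<exists>e. \<forall>x\<in>X1. x \<noteq> e \<longrightarrow> F {x, w} = i)"
    using gXX[OF X1 X2 ne(1) m1] by blast
  obtain s31 where s31: "\<forall>w\<in>X3 - X1. w \<noteq> s31 \<longrightarrow> (\<exists>e. \<forall>x\<in>X1. x \<noteq> e \<longrightarrow> F {x, w} = i)"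
    using gXX[OF X1 X3 ne(2) m2] by blast
  obtain s32 where s32: "\<forall>w\<in>X3 - X2. w \<noteq> s32 \<longrightarrow> (\<exists>e. \<forall>x\<in>X2. x \<noteq> e \<longrightarrow> F {x, w} = i)"
    using gXX[OF X2 X3 ne(3) m3] by blast
  have "card (X3 - X1 - X2) \<ge> 3" using int_small[OF X1 X2 X3 ne(2)[symmetric] ne(3)[symmetric]] by simp
  then obtain x3 where x3: "x3 \<in> X3 - X1 - X2" "x3 \<noteq> s31" "x3 \<noteq> s32" using pick2 by metis
  obtain f1 where f1: "\<forall>x\<in>X1. x \<noteq> f1 \<longrightarrow> F {x, x3} = i" using s31 x3 by blast
  obtain f2 where f2: "\<forall>x\<in>X2. x \<noteq> f2 \<longrightarrow> F {x, x3} = i" using s32 x3 by blast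
  have "card (X2 - X1) \<ge> 3" using XX_sizes(1)[OF X2 X1 ne(1)[symmetric]] by simp
  then obtain x2 where x2: "x2 \<in> X2 - X1" "x2 \<noteq> s21" "x2 \<noteq> f2" using pick2 by metis
  obtain g where g: "\<forall>x\<in>X1. x \<noteq> g \<longrightarrow> F {x, x2} = i" using s21 x2 by blast
  have "card X1 \<ge> 4" using XF_card6[OF X1] by simp
  then obtain x x' where xx: "x \<in> X1" "x' \<in> X1" "x \<noteq> x'" "x \<noteq> f1" "x \<noteq> g" "x' \<noteq> f1" "x' \<noteq> g"
    using pick22 by metis
  have V: "x \<in> V" "x' \<in> V" "x2 \<in> V" "x3 \<in> V" using xx x2 x3 XF_sub[OF X1] XF_sub[OF X2] XF_sub[OF X3] by auto
  have a1: "F {x2, x3} = i" "F {x, x2} = i" "F {x, x3} = i" "F {x', x2} = i" "F {x', x3} = i"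
    using f1 f2 g xx x2 by auto
  have a: "F {x2, x3} = i" "F {x2, x} = i" "F {x3, x} = i" "F {x', x2} = i" "F {x', x3} = i"
    using sw[OF a1(2)] sw[OF a1(3)] a1 by auto
  have b: "F {x', x} \<noteq> i" using XF_color[OF X1 xx(2) xx(1)] xx s21 by simp
  have "distinct [x2, x3, x, x']" using xx x2 x3 by auto
  thus False using K31a[of x2 x3 x x' i] a b V by blast
qed

end


context std begin

lemma XF_VE: "X \<in> XF c V F \<Longrightarrow> X \<in> VE c V F" unfolding VE_def by auto

lemma G:
  assumes p: "p \<in> XF c V F" and q: "q \<in> VE c V F" and r: "r \<in> VE c V F"
    and m1: "EF c V F p q = Some i" and m2: "EF c V F p r = Some i" and m3: "EF c V F q r = Some i"
  shows "p = q \<and> p = r"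
proof (cases "p = q")
  case True
  hence "set_color F p = i" using EF_loop m1 by auto
  moreover have "p = r"
  proof (rule ccontr)
    assume "p \<noteq> r"
    thus False using L1[OF p r] m2 calculation by auto
  qed
  ultimately show ?thesis using True by simp
next
  case pq: False
  show ?thesis
  proof (cases "p = r")
    case True
    hence "set_color F p = i" using EF_loop m2 by auto
    thus ?thesis using L1[OF p q] m1 pq by auto
  next
    case pr: False
    show ?thesis
    proof (cases "q = r")
      case True
      hence qX: "q \<in> XF c V F" "set_color F q = i" using EF_loop m3 by auto
      have "EF c V F q p = Some i" using m1 EF_sym by metis
      thus ?thesis using L1[OF qX(1) XF_VE[OF p]] pq qX(2) by auto
    next
      case qr: False
      show ?thesis
      proof -
        have False using VE_cases[OF q]
        proof
          assume qX: "q \<in> XF c V F"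
          show False using VE_cases[OF r]
          proof
            assume rX: "r \<in> XF c V F"
            show False using caseC[OF p qX rX pq pr qr m1 m2 m3] .
          next
            assume "\<exists>y. r = {y} \<and> {y} \<in> YF c V F"
            then obtain y where y: "r = {y}" "{y} \<in> YF c V F" by auto
            show False using caseB[OF p qX pq y(2)] m1 m2 m3 y(1) by simp
          qed
        next
          assume "\<exists>y. q = {y} \<and> {y} \<in> YF c V F"
          then obtain y1 where y1: "q = {y1}" "{y1} \<in> YF c V F" by auto
          show False using VE_cases[OF r]
          proof
            assume rX: "r \<in> XF c V F"
            have "EF c V F r q = Some i" using m3 EF_sym by metis
            thus False using caseB[OF p rX pr y1(2)] m1 m2 y1(1) by simp
          next
            assume "\<exists>y. r = {y} \<and> {y} \<in> YF c V F"
            then obtain y2 where y2: "r = {y2}" "{y2} \<in> YF c V F" by auto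
            have "y1 \<noteq> y2" using qr y1 y2 by auto
            thus False using caseD[OF p y1(2) y2(2)] m1 m2 m3 y1(1) y2(1) by simp
          qed
        qed
        thus ?thesis ..
      qed
    qed
  qed
qed

lemma ext_max:
  assumes S: "S \<subseteq> V" "card S \<ge> t" "mono_set F S"
  shows "\<exists>X\<in>XF c V F. S \<subseteq> X"
proof -
  define Q where "Q Y \<longleftrightarrow> S \<subseteq> Y \<and> Y \<subseteq> V \<and> card Y \<ge> t \<and> mono_set F Y" for Y
  have "Q S" using S Q_def by auto
  moreover have "\<forall>Y. Q Y \<longrightarrow> card Y < card V + 1"
  proof (intro allI impI)
    fix Y assume "Q Y"
    hence "Y \<subseteq> V" unfolding Q_def by blast
    hence "card Y \<le> card V" using card_mono[OF finV] by blast
    thus "card Y < card V + 1" by simp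
  qed
  ultimately obtain Y where Y: "Q Y" "\<forall>Y'. Q Y' \<longrightarrow> card Y' \<le> card Y"
    using Lattices_Big.ex_has_greatest_nat[of Q S card "card V + 1"] by blast
  have "Y \<in> XF c V F" unfolding XF_def
  proof (intro CollectI conjI allI impI)
    show "Y \<subseteq> V" "card Y \<ge> t" "mono_set F Y" using Y Q_def by auto
    fix Y' assume Y': "Y \<subset> Y' \<and> Y' \<subseteq> V \<and> t \<le> card Y' \<and> mono_set F Y'"
    hence "Q Y'" using Y Q_def by auto
    hence "card Y' \<le> card Y" using Y by auto
    moreover have "card Y < card Y'"
    proof -
      have "finite Y'" using Y' finV finite_subset by blast
      thus ?thesis using psubset_card_mono Y' by blast
    qed
    ultimately show False by simp
  qed
  thus ?thesis using Y Q_def by auto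
qed

lemma part2:
  assumes e: "embeds c V F 3 i \<phi>" and u: "\<exists>u\<in>{1..3}. \<phi> u \<in> XF c V F"
  shows "\<exists>v. \<forall>u\<in>{1..3}. \<phi> u = v"
proof -
  have VE: "\<phi> 1 \<in> VE c V F" "\<phi> 2 \<in> VE c V F" "\<phi> 3 \<in> VE c V F" using e unfolding embeds_def by auto
  have m: "EF c V F (\<phi> 1) (\<phi> 2) = Some i" "EF c V F (\<phi> 1) (\<phi> 3) = Some i" "EF c V F (\<phi> 2) (\<phi> 3) = Some i"
    "EF c V F (\<phi> 2) (\<phi> 1) = Some i" "EF c V F (\<phi> 3) (\<phi> 1) = Some i" "EF c V F (\<phi> 3) (\<phi> 2) = Some i"
    using e unfolding embeds_def by auto
  have all: "\<And>u::nat. u \<in> {1..3} \<Longrightarrow> u = 1 \<or> u = 2 \<or> u = 3" by auto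
  have eq: "\<phi> 1 = \<phi> 2 \<and> \<phi> 1 = \<phi> 3"
  proof -
    obtain u where u: "u \<in> {1..3}" "\<phi> u \<in> XF c V F" using u by blast
    show ?thesis using all[OF u(1)]
    proof (elim disjE)
      assume "u = 1" thus ?thesis using G[OF _ VE(2) VE(3) m(1) m(2) m(3)] u by auto
    next
      assume "u = 2" thus ?thesis using G[OF _ VE(1) VE(3) m(4) m(3) m(2)] u by auto
    next
      assume "u = 3" thus ?thesis using G[OF _ VE(1) VE(2) m(5) m(6) m(1)] u by auto
    qed
  qed
  show ?thesis
  proof (intro exI ballI)
    fix w assume "w \<in> {1..3::nat}"
    hence "w = 1 \<or> w = 2 \<or> w = 3" by (rule all)
    thus "\<phi> w = \<phi> 1" using eq by (elim disjE) metis+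
  qed
qed

lemma part1:
  assumes e: "embeds c V F t i \<phi>"
  shows "\<exists>v. \<forall>u\<in>{1..t}. \<phi> u = v"
proof -
  have VE: "\<And>u. u \<in> {1..t} \<Longrightarrow> \<phi> u \<in> VE c V F" using e unfolding embeds_def by auto
  have m: "\<And>u w. u \<in> {1..t} \<Longrightarrow> w \<in> {1..t} \<Longrightarrow> u \<noteq> w \<Longrightarrow> EF c V F (\<phi> u) (\<phi> w) = Some i"
    using e unfolding embeds_def by auto
  have ct: "card {1..t} \<ge> 3" by simp
  show ?thesis
  proof (cases "\<exists>u\<in>{1..t}. \<phi> u \<in> XF c V F")
    case True
    then obtain u where u: "u \<in> {1..t}" "\<phi> u \<in> XF c V F" by auto
    show ?thesis
    proof (intro exI ballI)
      fix w assume w: "w \<in> {1..t}"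
      show "\<phi> w = \<phi> u"
      proof (cases "w = u")
        case False
        obtain v where v: "v \<in> {1..t}" "v \<noteq> u" "v \<noteq> w" using pick2[OF ct] by blast
        have "\<phi> u = \<phi> w" using G[OF u(2) VE[OF w] VE[OF v(1)] m[OF u(1) w] m[OF u(1) v(1)] m[OF w v(1)]]
          False v by auto
        thus ?thesis by simp
      qed simp
    qed
  next
    case False
    have Y: "\<exists>y. \<phi> u = {y} \<and> {y} \<in> YF c V F" if "u \<in> {1..t}" for u
      using VE_cases[OF VE[OF that]] False that by auto
    define yy where "yy u = the_elem (\<phi> u)" for u
    have yy: "\<phi> u = {yy u}" "{yy u} \<in> YF c V F" if "u \<in> {1..t}" for u
      using Y[OF that] yy_def by auto
    have inj: "inj_on yy {1..t}"
    proof (rule inj_onI, rule ccontr)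
      fix u w assume uw: "u \<in> {1..t}" "w \<in> {1..t}" "yy u = yy w" "u \<noteq> w"
      hence "\<phi> u = \<phi> w" using yy(1)[OF uw(1)] yy(1)[OF uw(2)] by simp
      hence "EF c V F (\<phi> u) (\<phi> u) = Some i" using m[OF uw(1) uw(2) uw(4)] by simp
      hence "\<phi> u \<in> XF c V F" using EF_loop by blast
      thus False using False uw by auto
    qed
    define S where "S = yy ` {1..t}"
    have cS: "card S = t" unfolding S_def using card_image[OF inj] by simp
    have SV: "S \<subseteq> V"
    proof
      fix x assume "x \<in> S"
      then obtain u where "u \<in> {1..t}" "x = yy u" unfolding S_def by blast
      thus "x \<in> V" using YF_elem[OF yy(2)] by blast
    qed
    have mono: "mono_set F S" unfolding mono_set_def
    proof (intro exI allI impI)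
      fix ee assume ee: "ee \<subseteq> S \<and> card ee = 2"
      then obtain p q where pq: "ee = {p, q}" "p \<noteq> q" by (meson card_2_iff)
      obtain u where u: "u \<in> {1..t}" "p = yy u" using pq ee S_def by auto
      obtain w where w: "w \<in> {1..t}" "q = yy w" using pq ee S_def by auto
      have "u \<noteq> w" using pq u w by auto
      hence "EF c V F (\<phi> u) (\<phi> w) = Some i" using m u w by auto
      moreover have "EF c V F (\<phi> u) (\<phi> w) = Some (F {p, q})"
        using EF_YY[OF yy(2)[OF u(1)] yy(2)[OF w(1)]] pq u w yy by auto
      ultimately show "F ee = i" using pq by simp
    qed
    obtain X where X: "X \<in> XF c V F" "S \<subseteq> X" using ext_max[OF SV _ mono] cS by auto
    have "yy 1 \<in> S" unfolding S_def by simp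
    moreover have "yy 1 \<notin> X" using YF_elem[OF yy(2)[of 1]] X by auto
    ultimately show ?thesis using X by auto
  qed
qed

end


theorem claim5p5:
  fixes c :: nat and V :: "'a set" and F :: "'a set \<Rightarrow> nat"
  assumes "c \<ge> 2" and "standard c V F"
  shows "\<forall>i\<in>{1..c}.
     (\<forall>\<phi>. embeds c V F (max (c + 1) 6) i \<phi> \<longrightarrow>
        (\<exists>v. \<forall>u\<in>{1..max (c + 1) 6}. \<phi> u = v)) \<and>
     (\<forall>\<phi>. embeds c V F 3 i \<phi> \<and> (\<exists>u\<in>{1..3}. \<phi> u \<in> XF c V F) \<longrightarrow>
        (\<exists>v. \<forall>u\<in>{1..3}. \<phi> u = v))"
proof -
  interpret std c V F using assms by unfold_locales
  show ?thesis
  proof (intro ballI conjI allI impI)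
    fix i \<phi>
    assume "embeds c V F (max (c + 1) 6) i \<phi>"
    thus "\<exists>v. \<forall>u\<in>{1..max (c + 1) 6}. \<phi> u = v" by (rule part1)
  next
    fix i \<phi>
    assume "embeds c V F 3 i \<phi> \<and> (\<exists>u\<in>{1..3}. \<phi> u \<in> XF c V F)"
    thus "\<exists>v. \<forall>u\<in>{1..3}. \<phi> u = v" using part2 by blast
  qed
qed

end
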